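(* Normalize $\operatorname{var}(X)=1$ and $\operatorname{var}(W_1)=I_{d_1}$, suppose $\operatorname{var}(Y,X,W_1)$ is positive definite, and let $\|c\|<1$. Then $\mathcal B(r_X,0,c)=\{\beta_{\text{med}}\}$ if and only if there exists $p_1\in\mathbb R^{d_1}$ with $(I+cr_X')p_1=\sigma_{W_1,X}$ and $(p_1'r_X)^2(1-\|c\|^2)<k_0$. In particular, $\mathcal B(r_X,0,c)=\{\beta_{\text{med}}\}$ whenever $r_X'c\ne-1$ and $z_X(r_X,c)^2<k_0$.
   Context: For random vectors $A,B$ with $\operatorname{var}(B)$ invertible, $A^{\perp B}=A-\operatorname{cov}(A,B)\operatorname{var}(B)^{-1}B$. $\sigma_{A,B}=\operatorname{cov}(A,B)$. $\beta_{\text{med}}$ is the coefficient on $X$ in the linear projection of $Y$ on $(1,X,W_1)$. $k_0=\operatorname{var}(X^{\perp W_1})$; $z_X(r_X,c)=\frac{r_X'\sigma_{W_1,X}\sqrt{1-\|c\|^2}}{1+r_X'c}$. For $r_X,r_Y,c\in\mathbb R^{d_1}$, $\mathcal B(r_X,r_Y,c)$ is the set of $b\in\mathbb R$ such that for some $(p_1,g_1)\in\mathbb R^{d_1}\times\mathbb R^{d_1}$ (with $\Sigma_{\text{obs}}=\operatorname{var}(W_1)$): $\operatorname{cov}(Y,X)=b\operatorname{var}(X)+g_1'(\Sigma_{\text{obs}}+cr_X'+r_Yc'+r_Yr_X')p_1$; $\operatorname{cov}(Y,W_1)=b\operatorname{cov}(X,W_1)+g_1'(\Sigma_{\text{obs}}+r_Yc')$;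 $\operatorname{cov}(X,W_1)=p_1'(\Sigma_{\text{obs}}+r_Xc')$; $\operatorname{var}(Y)>b^2\operatorname{var}(X)+g_1'(\Sigma_{\text{obs}}+r_Yr_Y'+2r_Yc')g_1+2bg_1'(\Sigma_{\text{obs}}+cr_X'+r_Yc'+r_Yr_X')p_1$; $\operatorname{var}(X)>p_1'(\Sigma_{\text{obs}}+2r_Xc'+r_Xr_X')p_1$; $1>c'\Sigma_{\text{obs}}^{-1}c$. *)

theory Defs
  imports "HOL-Analysis.Analysis"
begin

text \<open>Second-moment data of the random vectors (Y, X, W1), with W1 of dimension CARD('n):
  vY = var(Y), vX = var(X), sYX = cov(Y,X), sYW = cov(Y,W1) (as a vector),
  sXW = cov(X,W1) = sigma_{W1,X} (as a vector), Sig = var(W1) = Sigma_obs.\<close>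

definition outer :: "real^'n \<Rightarrow> real^'n \<Rightarrow> real^'n^'n" where
  "outer a b = (\<chi> i j. a $ i * b $ j)"

text \<open>var(Y,X,W1) positive definite: the quadratic form of the joint covariance
  matrix is positive on every nonzero vector (a,b,v).\<close>
definition joint_var_posdef ::
  "real \<Rightarrow> real \<Rightarrow> real \<Rightarrow> real^'n \<Rightarrow> real^'n \<Rightarrow> real^'n^'n \<Rightarrow> bool" where
  "joint_var_posdef vY vX sYX sYW sXW Sig \<longleftrightarrow>
     (\<forall>a b (v::real^'n). (a, b, v) \<noteq> (0, 0, 0) \<longrightarrow>
        a^2 * vY + b^2 * vX + 2 * a * b * sYX + 2 * a * (v \<bullet> sYW) + 2 * b * (v \<bullet> sXW)
        + v \<bullet> (Sig *v v) > 0)"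

text \<open>beta_med: coefficient on X in the linear projection of Y on (1, X, W1),
  characterised by the normal equations (residual uncorrelated with X and W1).\<close>
definition beta_med ::
  "real \<Rightarrow> real \<Rightarrow> real^'n \<Rightarrow> real^'n \<Rightarrow> real^'n^'n \<Rightarrow> real" where
  "beta_med vX sYX sYW sXW Sig =
     (THE b. \<exists>\<gamma>::real^'n. sYX = b * vX + \<gamma> \<bullet> sXW \<and> sYW = b *\<^sub>R sXW + Sig *v \<gamma>)"

text \<open>k0 = var(X^{perp W1}) = var(X) - cov(X,W1) var(W1)^{-1} cov(W1,X).\<close>
definition k0 :: "real \<Rightarrow> real^'n \<Rightarrow> real^'n^'n \<Rightarrow> real" where
  "k0 vX sXW Sig = vX - sXW \<bullet> (matrix_inv Sig *v sXW)"

definition zX :: "real^'n \<Rightarrow> real^'n \<Rightarrow> real^'n \<Rightarrow> real" where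
  "zX sXW rX c = (rX \<bullet> sXW) * sqrt (1 - (norm c)^2) / (1 + rX \<bullet> c)"

text \<open>The identified set B(rX, rY, c). Row-vector equations of the paper are transposed
  into column-vector form.\<close>
definition Bset ::
  "real \<Rightarrow> real \<Rightarrow> real \<Rightarrow> real^'n \<Rightarrow> real^'n \<Rightarrow> real^'n^'n \<Rightarrow>
   real^'n \<Rightarrow> real^'n \<Rightarrow> real^'n \<Rightarrow> real set" where
  "Bset vY vX sYX sYW sXW Sig rX rY c =
     {b. \<exists>p1 g1 :: real^'n.
        sYX = b * vX + g1 \<bullet> ((Sig + outer c rX + outer rY c + outer rY rX) *v p1)
      \<and> sYW = b *\<^sub>R sXW + (Sig + outer c rY) *v g1
      \<and> sXW = (Sig + outer c rX) *v p1
      \<and> vY > b^2 * vX + g1 \<bullet> ((Sig + outer rY rY + 2 *\<^sub>R outer rY c) *v g1)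
             + 2 * b * (g1 \<bullet> ((Sig + outer c rX + outer rY c + outer rY rX) *v p1))
      \<and> vX > p1 \<bullet> ((Sig + 2 *\<^sub>R outer rX c + outer rX rX) *v p1)
      \<and> 1 > c \<bullet> (matrix_inv Sig *v c)}"

end

theory Submission
  imports Defs
begin

lemma outer_mult: "outer a b *v p = (b \<bullet> p) *\<^sub>R a"
  by (simp add: vec_eq_iff matrix_vector_mult_def outer_def inner_vec_def sum_distrib_left mult_ac)

lemma outer_zero1[simp]: "outer 0 b = 0" and outer_zero2[simp]: "outer a 0 = 0"
  by (simp_all add: outer_def vec_eq_iff)

lemma matrix_inv_I: "matrix_inv (mat 1 :: real^'n^'n) = mat 1"
proof -
  have "\<exists>A'::real^'n^'n. mat 1 ** A' = mat 1 \<and> A' ** mat 1 = mat 1"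
    by (intro exI[of _ "mat 1"]) simp
  from someI_ex[OF this] show ?thesis unfolding matrix_inv_def by simp
qed

lemma pd_facts:
  fixes vY sYX :: real and sYW s :: "real^'n"
  assumes "joint_var_posdef vY 1 sYX sYW s (mat 1)"
  shows "s \<bullet> s < 1"
    and "\<And>b g. sYX = b + g \<bullet> s \<Longrightarrow> sYW = b *\<^sub>R s + g \<Longrightarrow> vY > b^2 + g \<bullet> g + 2 * b * (g \<bullet> s)"
proof -
  have "0 < 0^2 * vY + 1^2 * 1 + 2 * 0 * 1 * sYX + 2 * 0 * ((-s) \<bullet> sYW) + 2 * 1 * ((-s) \<bullet> s)
        + (-s) \<bullet> (mat 1 *v (-s))"
    using assms unfolding joint_var_posdef_def by (metis prod.inject zero_neq_one)
  then show "s \<bullet> s < 1" by (simp add: matrix_vector_mul_lid)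
next
  fix b g assume h: "sYX = b + g \<bullet> s" "sYW = b *\<^sub>R s + g"
  have "0 < 1^2 * vY + (-b)^2 * 1 + 2 * 1 * (-b) * sYX + 2 * 1 * ((-g) \<bullet> sYW) + 2 * (-b) * ((-g) \<bullet> s)
        + (-g) \<bullet> (mat 1 *v (-g))"
    using assms unfolding joint_var_posdef_def by (metis prod.inject one_neq_zero)
  then show "vY > b^2 + g \<bullet> g + 2 * b * (g \<bullet> s)"
    using h by (simp add: matrix_vector_mul_lid inner_add_right inner_commute algebra_simps power2_eq_square)
qed

lemma Bset_char:
  fixes vY sYX :: real and sYW s rX c :: "real^'n"
  assumes pd: "joint_var_posdef vY 1 sYX sYW s (mat 1)" and nc: "norm c < 1"
  shows "Bset vY 1 sYX sYW s (mat 1) rX 0 c =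
     {b. b * (1 - s \<bullet> s) = sYX - sYW \<bullet> s \<and>
        (\<exists>p. p + (rX \<bullet> p) *\<^sub>R c = s \<and> (p \<bullet> rX)^2 * (1 - (norm c)^2) < 1 - s \<bullet> s)}"
    (is "?L = ?R")
proof
  show "?L \<subseteq> ?R"
  proof
    fix b assume "b \<in> ?L"
    then obtain p g :: "real^'n" where
      e1: "sYX = b * 1 + g \<bullet> (p + (rX \<bullet> p) *\<^sub>R c)" and
      e2: "sYW = b *\<^sub>R s + g" and
      e3: "s = p + (rX \<bullet> p) *\<^sub>R c" and
      e5: "1 > p \<bullet> (p + 2 *\<^sub>R ((c \<bullet> p) *\<^sub>R rX) + (rX \<bullet> p) *\<^sub>R rX)"
      unfolding Bset_def
      by (auto simp: matrix_vector_mult_add_rdistrib matrix_vector_mul_lid outer_mult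
          scaleR_matrix_vector_assoc[symmetric])
    have gs: "g \<bullet> (p + (rX \<bullet> p) *\<^sub>R c) = g \<bullet> s" using e3 by simp
    have "b * (1 - s \<bullet> s) = sYX - sYW \<bullet> s"
      using e1 e2 unfolding gs by (simp add: inner_add_left algebra_simps inner_commute)
    moreover have "(p \<bullet> rX)^2 * (1 - (norm c)^2) < 1 - s \<bullet> s"
      using e5 unfolding e3 power2_norm_eq_inner
      by (simp add:  inner_add_left inner_add_right inner_commute algebra_simps power2_eq_square)
    ultimately show "b \<in> ?R" using e3 by auto
  qed
next
  show "?R \<subseteq> ?L"
  proof
    fix b assume "b \<in> ?R"
    then obtain p where hb: "b * (1 - s \<bullet> s) = sYX - sYW \<bullet> s" and
      e3: "p + (rX \<bullet> p) *\<^sub>R c = s" and e5: "(p \<bullet> rX)^2 * (1 - (norm c)^2) < 1 - s \<bullet> s" by auto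
    define g where "g = sYW - b *\<^sub>R s"
    have e1: "sYX = b + g \<bullet> s" using hb by (simp add: g_def inner_diff_left algebra_simps)
    have e2: "sYW = b *\<^sub>R s + g" by (simp add: g_def)
    have e4: "vY > b^2 + g \<bullet> g + 2 * b * (g \<bullet> s)" using pd_facts(2)[OF pd e1 e2] .
    have e5': "1 > p \<bullet> (p + 2 *\<^sub>R ((c \<bullet> p) *\<^sub>R rX) + (rX \<bullet> p) *\<^sub>R rX)"
      using e5 unfolding e3[symmetric] power2_norm_eq_inner
      by (simp add:  inner_add_left inner_add_right inner_commute algebra_simps power2_eq_square)
    have "(norm c)^2 < 1^2" by (rule power_strict_mono[OF nc norm_ge_zero]) simp
    then have e6: "1 > c \<bullet> c" by (simp add: power2_norm_eq_inner)
    show "b \<in> ?L" unfolding Bset_def mem_Collect_eq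
      apply (rule exI[of _ p], rule exI[of _ g])
      using e1 e2 e3 e4 e5' e6
      by (simp add: matrix_vector_mult_add_rdistrib matrix_vector_mul_lid outer_mult matrix_inv_I
          scaleR_matrix_vector_assoc[symmetric])
  qed
qed

theorem mainTheorem20:
  fixes vY vX sYX :: real and sYW sXW rX c :: "real^'n"
  assumes "vX = 1"
    and "joint_var_posdef vY vX sYX sYW sXW (mat 1)"
    and "norm c < 1"
  shows "(Bset vY vX sYX sYW sXW (mat 1) rX 0 c = {beta_med vX sYX sYW sXW (mat 1)}
           \<longleftrightarrow> (\<exists>p1::real^'n. (mat 1 + outer c rX) *v p1 = sXW
                  \<and> (p1 \<bullet> rX)^2 * (1 - (norm c)^2) < k0 vX sXW (mat 1)))
       \<and> (rX \<bullet> c \<noteq> -1 \<and> (zX sXW rX c)^2 < k0 vX sXW (mat 1)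
           \<longrightarrow> Bset vY vX sYX sYW sXW (mat 1) rX 0 c = {beta_med vX sYX sYW sXW (mat 1)})"
proof -
  let ?s = sXW
  let ?\<beta> = "(sYX - sYW \<bullet> sXW) / (1 - sXW \<bullet> sXW)"
  have pd: "joint_var_posdef vY 1 sYX sYW sXW (mat 1)" using assms by simp
  have ss: "sXW \<bullet> sXW < 1" using pd_facts(1)[OF pd] .
  have k: "k0 vX sXW (mat 1) = 1 - sXW \<bullet> sXW"
    using assms(1) by (simp add: k0_def matrix_inv_I matrix_vector_mul_lid)
  have mv: "\<And>p. (mat 1 + outer c rX) *v p = p + (rX \<bullet> p) *\<^sub>R c"
    by (simp add: matrix_vector_mult_add_rdistrib matrix_vector_mul_lid outer_mult)
  have bm: "beta_med vX sYX sYW sXW (mat 1) = ?\<beta>"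
    unfolding beta_med_def assms(1)
  proof (rule the_equality)
    show "\<exists>\<gamma>. sYX = ?\<beta> * 1 + \<gamma> \<bullet> sXW \<and> sYW = ?\<beta> *\<^sub>R sXW + mat 1 *v \<gamma>"
    proof (intro exI[of _ "sYW - ?\<beta> *\<^sub>R sXW"] conjI)
      have "?\<beta> * (1 - sXW \<bullet> sXW) = sYX - sYW \<bullet> sXW" using ss by simp
      then have eq2: "?\<beta> - ?\<beta> * (sXW \<bullet> sXW) = sYX - sYW \<bullet> sXW"
        by (simp only: right_diff_distrib mult_1_right)
      have "(sYW - ?\<beta> *\<^sub>R sXW) \<bullet> sXW = sYW \<bullet> sXW - ?\<beta> * (sXW \<bullet> sXW)"
        by (simp only: inner_diff_left inner_scaleR_left)
      then show "sYX = ?\<beta> * 1 + (sYW - ?\<beta> *\<^sub>R sXW) \<bullet> sXW"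
        using eq2 by (simp only: mult_1_right)
    qed (simp add: matrix_vector_mul_lid)
  next
    fix b assume "\<exists>\<gamma>. sYX = b * 1 + \<gamma> \<bullet> sXW \<and> sYW = b *\<^sub>R sXW + mat 1 *v \<gamma>"
    then obtain \<gamma> where h: "sYX = b + \<gamma> \<bullet> sXW" "sYW = b *\<^sub>R sXW + \<gamma>"
      by (auto simp: matrix_vector_mul_lid)
    have "b * (1 - sXW \<bullet> sXW) = sYX - sYW \<bullet> sXW"
      using h by (simp add: inner_add_left algebra_simps inner_commute)
    then show "b = ?\<beta>" using ss by (simp add: field_simps)
  qed
  define Q where "Q = (\<exists>p. p + (rX \<bullet> p) *\<^sub>R c = sXW \<and> (p \<bullet> rX)^2 * (1 - (norm c)^2) < 1 - sXW \<bullet> sXW)"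
  have B: "Bset vY vX sYX sYW sXW (mat 1) rX 0 c = {b. b = ?\<beta> \<and> Q}"
  proof -
    have d: "1 - sXW \<bullet> sXW \<noteq> 0" using ss by simp
    have beq: "\<And>b. b * (1 - sXW \<bullet> sXW) = sYX - sYW \<bullet> sXW \<longleftrightarrow> b = ?\<beta>"
      using d by (simp add: eq_divide_eq)
    show ?thesis unfolding assms(1) Bset_char[OF pd assms(3)] beq Q_def ..
  qed
  have iff: "Bset vY vX sYX sYW sXW (mat 1) rX 0 c = {beta_med vX sYX sYW sXW (mat 1)} \<longleftrightarrow> Q"
    unfolding B bm by auto
  have Qeq: "Q \<longleftrightarrow> (\<exists>p1::real^'n. (mat 1 + outer c rX) *v p1 = sXW
                  \<and> (p1 \<bullet> rX)^2 * (1 - (norm c)^2) < k0 vX sXW (mat 1))"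
    unfolding Q_def k mv ..
  have part2: "Q" if h: "rX \<bullet> c \<noteq> -1" "(zX sXW rX c)^2 < k0 vX sXW (mat 1)"
  proof -
    define t where "t = (rX \<bullet> sXW) / (1 + rX \<bullet> c)"
    define p where "p = sXW - t *\<^sub>R c"
    have d: "1 + rX \<bullet> c \<noteq> 0" using h(1) by (metis add_eq_0_iff)
    have tp: "rX \<bullet> p = t"
      using d by (simp add: p_def t_def inner_diff_right field_simps)
    have nc: "0 \<le> 1 - (norm c)^2" using assms(3)
      by (simp add: abs_square_le_1 less_imp_le)
    have z: "(zX sXW rX c)^2 = t^2 * (1 - (norm c)^2)"
      using nc by (simp add: zX_def t_def power_divide power_mult_distrib)
    show Q unfolding Q_def
      using h(2) tp by (intro exI[of _ p]) (simp add: p_def z k inner_commute)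
  qed
  show ?thesis using iff Qeq part2 by blast
qed


end
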